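(* Let $F\in SL(d,\mathbb{Z})$, acting on $\mathbb{T}^d$, be partially hyperbolic with invariant splitting $\mathbb{R}^d=S\oplus C\oplus U$. Suppose that for every smooth function $\varphi:\mathbb{T}^d\to\mathbb{R}$ with $\operatorname{PCF}_\gamma\varphi=0$ for every $su$-cycle $\gamma$ of $F$, there exist a function $u:\mathbb{T}^d\to\mathbb{R}$ and a constant $K$ with $\varphi(x)=u(Fx)-u(x)+K$ for all $x$. Then $F$ is Katznelson irreducible, i.e. $C\cap\mathbb{Z}^d=\{0\}$.
   Context: Partial hyperbolicity: for some metric, $\|F|_S\|<1$, $m(F|_U)>1$, $\|F|_S\|<m(F|_C)$, $m(F|_U)>\|F|_C\|$ ($m$ = conorm). The strong stable and unstable leaves of $F$ are $\mathcal{W}^{ss}(x)=x+S$, $\mathcal{W}^{uu}(x)=x+U$ (mod $\mathbb{Z}^d$). Holonomy functionals: for $x^+\in\mathcal{W}^{ss}(x)$, $\operatorname{Hol}_x^{x^+}\varphi=\sum_{n\ge0}(\varphi(F^nx)-\varphi(F^nx^+))$; for $x^-\in\mathcal{W}^{uu}(x)$, $\operatorname{Hol}_x^{x^-}\varphi=-\sum_{n\ge1}(\varphi(F^{-n}x)-\varphi(F^{-n}x^-))$. An $su$-cycle is $\gamma=(x_0,\dots,x_k)$ with $x_k=x_0$ and each $x_j\in\mathcal{W}^{ss}(x_{j-1})\cup\mathcal{W}^{uu}(x_{j-1})$; $\operatorname{PCF}_\gamma\varphi=\sum_{j=1}^k\operatorname{Hol}_{x_{j-1}}^{x_j}\varphi$.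 *)

theory Defs
  imports "HOL-Analysis.Analysis"
begin

section \<open>Smooth functions on R^d\<close>

text \<open>Iterated directional (Frechet) derivatives along a list of directions.\<close>
fun iter_dderiv :: "(real^'n) list \<Rightarrow> (real^'n \<Rightarrow> real) \<Rightarrow> (real^'n \<Rightarrow> real)" where
  "iter_dderiv [] f = f"
| "iter_dderiv (v # vs) f = (\<lambda>x. frechet_derivative (iter_dderiv vs f) (at x) v)"

text \<open>C-infinity: every iterated derivative exists and is differentiable everywhere.\<close>
definition smooth_fun :: "(real^'n \<Rightarrow> real) \<Rightarrow> bool" where
  "smooth_fun f \<longleftrightarrow> (\<forall>vs x. iter_dderiv vs f differentiable (at x))"

section \<open>The torus T^d = R^d / Z^d\<close>

definition int_vec :: "real^'n \<Rightarrow> bool" where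
  "int_vec k \<longleftrightarrow> (\<forall>i. k $ i \<in> \<int>)"

text \<open>Functions on the torus are represented as Z^d-periodic functions on R^d.\<close>
definition torus_fun :: "(real^'n \<Rightarrow> 'b) \<Rightarrow> bool" where
  "torus_fun f \<longleftrightarrow> (\<forall>x k. int_vec k \<longrightarrow> f (x + k) = f x)"

text \<open>F in SL(d,Z).\<close>
definition SL_int :: "real^'n^'n \<Rightarrow> bool" where
  "SL_int F \<longleftrightarrow> (\<forall>i j. F $ i $ j \<in> \<int>) \<and> det F = 1"

text \<open>Action of the matrix F (and its powers, including negative ones) on lifts.\<close>
definition Fpow :: "real^'n^'n \<Rightarrow> int \<Rightarrow> real^'n \<Rightarrow> real^'n" where
  "Fpow F n x = (if n \<ge> 0 then ((\<lambda>y. F *v y) ^^ nat n) x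
                 else ((\<lambda>y. matrix_inv F *v y) ^^ nat (- n)) x)"

section \<open>Partial hyperbolicity\<close>

text \<open>An adapted metric is a Euclidean norm x \<mapsto> norm (P x), P invertible.
  The norm / conorm inequalities are written out pointwise.\<close>
definition partially_hyperbolic ::
  "real^'n^'n \<Rightarrow> (real^'n) set \<Rightarrow> (real^'n) set \<Rightarrow> (real^'n) set \<Rightarrow> bool" where
  "partially_hyperbolic F S C U \<longleftrightarrow>
     subspace S \<and> subspace C \<and> subspace U \<and> S \<noteq> {0} \<and> U \<noteq> {0} \<and>
     (\<forall>x. \<exists>!scu. fst scu \<in> S \<and> fst (snd scu) \<in> C \<and> snd (snd scu) \<in> U \<and>
                  x = fst scu + fst (snd scu) + snd (snd scu)) \<and>
     (\<lambda>y. F *v y) ` S = S \<and> (\<lambda>y. F *v y) ` C = C \<and> (\<lambda>y. F *v y) ` U = U \<and>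
     (\<exists>P :: real^'n^'n. invertible P \<and>
        (let N = (\<lambda>v. norm (P *v v)) in
         \<exists>sS mC MC mU.
           sS < 1 \<and> mU > 1 \<and> sS < mC \<and> MC < mU \<and>
           (\<forall>v\<in>S. N (F *v v) \<le> sS * N v) \<and>
           (\<forall>v\<in>C. mC * N v \<le> N (F *v v) \<and> N (F *v v) \<le> MC * N v) \<and>
           (\<forall>v\<in>U. mU * N v \<le> N (F *v v))))"

section \<open>Holonomies and periodic cycle functionals\<close>

text \<open>Strong stable / unstable leaves on the torus, in terms of lifts.\<close>
definition Wss :: "(real^'n) set \<Rightarrow> real^'n \<Rightarrow> (real^'n) set" where
  "Wss S x = {y. \<exists>s\<in>S. int_vec (y - x - s)}"

definition Wuu :: "(real^'n) set \<Rightarrow> real^'n \<Rightarrow> (real^'n) set" where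
  "Wuu U x = {y. \<exists>u\<in>U. int_vec (y - x - u)}"

definition Hol_s :: "real^'n^'n \<Rightarrow> real^'n \<Rightarrow> real^'n \<Rightarrow> (real^'n \<Rightarrow> real) \<Rightarrow> real" where
  "Hol_s F x x' \<phi> = (\<Sum>n. \<phi> (Fpow F (int n) x) - \<phi> (Fpow F (int n) x'))"

definition Hol_u :: "real^'n^'n \<Rightarrow> real^'n \<Rightarrow> real^'n \<Rightarrow> (real^'n \<Rightarrow> real) \<Rightarrow> real" where
  "Hol_u F x x' \<phi> = - (\<Sum>n. \<phi> (Fpow F (- int (Suc n)) x) - \<phi> (Fpow F (- int (Suc n)) x'))"

text \<open>An su-cycle: start point x0 and a list of legs (x_j, b_j), where b_j = True
  means x_j lies on the strong stable leaf of x_(j-1), b_j = False the strong unstable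
  leaf; the last point equals x0 on the torus.\<close>
definition su_cycle ::
  "(real^'n) set \<Rightarrow> (real^'n) set \<Rightarrow> real^'n \<Rightarrow> ((real^'n) \<times> bool) list \<Rightarrow> bool" where
  "su_cycle S U x0 legs \<longleftrightarrow> legs \<noteq> [] \<and>
     (\<forall>j < length legs.
        (let prev = (if j = 0 then x0 else fst (legs ! (j - 1))); (y, b) = legs ! j in
         if b then y \<in> Wss S prev else y \<in> Wuu U prev)) \<and>
     int_vec (fst (last legs) - x0)"

definition PCF ::
  "real^'n^'n \<Rightarrow> real^'n \<Rightarrow> ((real^'n) \<times> bool) list \<Rightarrow> (real^'n \<Rightarrow> real) \<Rightarrow> real" where
  "PCF F x0 legs \<phi> = (\<Sum>j < length legs.
      (let prev = (if j = 0 then x0 else fst (legs ! (j - 1))); (y, b) = legs ! j in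
       if b then Hol_s F prev y \<phi> else Hol_u F prev y \<phi>))"

end

theory Submission
  imports Defs
begin

lemma int_vec_0[simp]: "int_vec 0" by (simp add: int_vec_def)
lemma int_vec_add: "int_vec a \<Longrightarrow> int_vec b \<Longrightarrow> int_vec (a + b)"
  by (simp add: int_vec_def)
lemma int_vec_diff: "int_vec a \<Longrightarrow> int_vec b \<Longrightarrow> int_vec (a - b)"
  by (simp add: int_vec_def)
lemma int_vec_scale: "c \<in> \<int> \<Longrightarrow> int_vec a \<Longrightarrow> int_vec (c *\<^sub>R a)"
  by (simp add: int_vec_def)
lemma int_vec_sum: "(\<And>i. i \<in> I \<Longrightarrow> int_vec (f i)) \<Longrightarrow> int_vec (\<Sum>i\<in>I. f i)"
  unfolding int_vec_def by (auto intro!: Ints_sum simp: sum_component)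
lemma int_vec_axis: "int_vec (axis j 1)"
  by (simp add: int_vec_def axis_def)

lemma int_dep:
  fixes v :: "'i \<Rightarrow> real^'n"
  assumes "finite I" "\<forall>i\<in>I. int_vec (v i)" "(\<Sum>i\<in>I. c i *\<^sub>R v i) = 0" "\<exists>i\<in>I. c i \<noteq> 0"
  shows "\<exists>z. (\<forall>i\<in>I. z i \<in> \<int>) \<and> (\<exists>i\<in>I. z i \<noteq> 0) \<and> (\<Sum>i\<in>I. z i *\<^sub>R v i) = 0"
  using assms
proof (induction I arbitrary: c v rule: finite_induct)
  case empty
  then show ?case by simp
next
  case (insert n I)
  show ?case
  proof (cases "v n = 0")
    case True
    let ?z = "\<lambda>i. if i = n then 1 else (0::real)"
    have "(\<Sum>i\<in>insert n I. ?z i *\<^sub>R v i) = 0"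
      using insert.hyps True by (auto simp: sum.insert intro!: sum.neutral)
    then show ?thesis by (intro exI[of _ ?z]) auto
  next
    case False
    then obtain l where l: "v n $ l \<noteq> 0" by (metis vec_eq_iff zero_index)
    define p where "p = v n $ l"
    have pZ: "p \<in> \<int>" using insert.prems(1) unfolding p_def int_vec_def by auto
    define w where "w i = p *\<^sub>R v i - (v i $ l) *\<^sub>R v n" for i
    have wl: "w i $ l = 0" for i by (simp add: w_def p_def)
    have wint: "\<forall>i\<in>I. int_vec (w i)"
      using insert.prems(1) unfolding w_def int_vec_def p_def by auto
    have rel: "c n *\<^sub>R v n + (\<Sum>i\<in>I. c i *\<^sub>R v i) = 0"
      using insert.prems(2) insert.hyps by (simp add: sum.insert)
    define \<kappa> where "\<kappa> = p * c n + (\<Sum>i\<in>I. c i * v i $ l)"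
    have eq1: "(\<Sum>i\<in>I. c i *\<^sub>R w i) = - \<kappa> *\<^sub>R v n"
    proof -
      have "(\<Sum>i\<in>I. c i *\<^sub>R w i) = p *\<^sub>R (\<Sum>i\<in>I. c i *\<^sub>R v i) - (\<Sum>i\<in>I. c i * v i $ l) *\<^sub>R v n"
        by (simp add: w_def scaleR_diff_right scaleR_sum_right scaleR_sum_left sum_subtractf algebra_simps)
      also have "\<dots> = - \<kappa> *\<^sub>R v n"
      proof -
        have "(\<Sum>i\<in>I. c i *\<^sub>R v i) = - (c n *\<^sub>R v n)"
          using rel by (simp add: eq_neg_iff_add_eq_0 add.commute)
        then show ?thesis unfolding \<kappa>_def by (simp add: algebra_simps scaleR_add_left)
      qed
      finally show ?thesis .
    qed
    have "(\<Sum>i\<in>I. c i *\<^sub>R w i) $ l = 0" by (simp add: sum_component wl)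
    then have "\<kappa> * p = 0" using eq1 by (simp add: p_def)
    then have k0: "\<kappa> = 0" using l p_def by simp
    then have sw: "(\<Sum>i\<in>I. c i *\<^sub>R w i) = 0" using eq1 by simp
    have "\<exists>i\<in>I. c i \<noteq> 0"
    proof (rule ccontr)
      assume nc: "\<not> (\<exists>i\<in>I. c i \<noteq> 0)"
      then have "c n *\<^sub>R v n = 0" using rel by simp
      moreover have "c n \<noteq> 0" using insert.prems(3) nc by auto
      ultimately show False using False by simp
    qed
    from insert.IH[OF wint sw this] obtain z' where
      z': "\<forall>i\<in>I. z' i \<in> \<int>" "\<exists>i\<in>I. z' i \<noteq> 0" "(\<Sum>i\<in>I. z' i *\<^sub>R w i) = 0" by blast
    define z where "z i = (if i = n then - (\<Sum>j\<in>I. z' j * v j $ l) else p * z' i)" for i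
    have "(\<Sum>i\<in>insert n I. z i *\<^sub>R v i) = z n *\<^sub>R v n + (\<Sum>i\<in>I. z i *\<^sub>R v i)"
      using insert.hyps by (simp add: sum.insert)
    also have "(\<Sum>i\<in>I. z i *\<^sub>R v i) = (\<Sum>i\<in>I. (p * z' i) *\<^sub>R v i)"
      using insert.hyps by (intro sum.cong) (auto simp: z_def)
    also have "\<dots> = (\<Sum>i\<in>I. z' i *\<^sub>R w i) + (\<Sum>j\<in>I. z' j * v j $ l) *\<^sub>R v n"
      by (simp add: w_def scaleR_diff_right scaleR_sum_right scaleR_sum_left sum_subtractf algebra_simps)
    finally have "(\<Sum>i\<in>insert n I. z i *\<^sub>R v i) = 0" using z'(3) by (simp add: z_def)
    moreover have "\<forall>i\<in>insert n I. z i \<in> \<int>"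
      using z'(1) pZ insert.prems(1) insert.hyps unfolding z_def int_vec_def
      by (auto intro!: Ints_sum Ints_mult)
    moreover have "\<exists>i\<in>insert n I. z i \<noteq> 0"
      using z'(2) l insert.hyps unfolding z_def p_def by auto
    ultimately show ?thesis by blast
  qed
qed

lemma det_Ints: "(\<forall>i j. A $ i $ j \<in> \<int>) \<Longrightarrow> det (A::real^'n^'n) \<in> \<int>"
  unfolding det_def by (auto intro!: Ints_sum Ints_mult Ints_prod)

lemma mv_int: "(\<forall>i j. A $ i $ j \<in> \<int>) \<Longrightarrow> int_vec x \<Longrightarrow> int_vec ((A::real^'n^'n) *v x)"
  unfolding int_vec_def matrix_vector_mult_def by (auto intro!: Ints_sum Ints_mult)

lemma SL_invertible: "SL_int F \<Longrightarrow> invertible F"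
  unfolding SL_int_def by (simp add: invertible_det_nz)

lemma SL_inv_mats:
  assumes "SL_int F" shows "matrix_inv F ** F = mat 1" "F ** matrix_inv F = mat 1"
proof -
  have "\<exists>A'. F ** A' = mat 1 \<and> A' ** F = mat 1" using SL_invertible[OF assms] unfolding invertible_def .
  then have "F ** matrix_inv F = mat 1 \<and> matrix_inv F ** F = mat 1"
    unfolding matrix_inv_def by (rule someI_ex)
  then show "matrix_inv F ** F = mat 1" "F ** matrix_inv F = mat 1" by auto
qed

lemma SL_inv_left: "SL_int F \<Longrightarrow> matrix_inv F *v (F *v x) = x"
  by (simp add: matrix_vector_mul_assoc SL_inv_mats)
lemma SL_inv_right: "SL_int F \<Longrightarrow> F *v (matrix_inv F *v x) = x"
  by (simp add: matrix_vector_mul_assoc SL_inv_mats)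

lemma SL_int_vec: "SL_int F \<Longrightarrow> int_vec x \<Longrightarrow> int_vec (F *v x)"
  unfolding SL_int_def by (simp add: mv_int)

lemma SL_inv_int_vec:
  fixes F :: "real^'n^'n"
  assumes F: "SL_int F" and b: "int_vec b"
  shows "int_vec (matrix_inv F *v b)"
proof -
  define x where "x = matrix_inv F *v b"
  have Fx: "F *v x = b" using SL_inv_right[OF F] by (simp add: x_def)
  have "x $ k \<in> \<int>" for k
  proof -
    have "det((\<chi> i j. if j = k then (F *v x)$i else F$i$j):: real^'n^'n) = x$k * det F"
      by (rule cramer_lemma)
    moreover have "det F = 1" using F unfolding SL_int_def by simp
    moreover have "det((\<chi> i j. if j = k then (F *v x)$i else F$i$j):: real^'n^'n) \<in> \<int>"
      using F b unfolding Fx SL_int_def int_vec_def by (intro det_Ints) auto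
    ultimately show ?thesis by simp
  qed
  then show ?thesis unfolding x_def int_vec_def by simp
qed

lemma funpow_linear: "linear (((\<lambda>y. A *v y)::real^'n\<Rightarrow>real^'n) ^^ n)"
proof (induction n)
  case 0 then show ?case by (simp add: linear_iff)
next
  case (Suc n)
  have "((\<lambda>y. A *v y) ^^ Suc n) = (\<lambda>y. A *v y) \<circ> ((\<lambda>y. A *v y) ^^ n)" by simp
  then show ?case using Suc by (metis linear_compose matrix_vector_mul_linear)
qed

lemma funpow_int_vec: fixes f :: "real^'n \<Rightarrow> real^'n" assumes "\<And>x. int_vec x \<Longrightarrow> int_vec (f x)" "int_vec x" shows "int_vec ((f ^^ n) x)"
  using assms by (induction n) (simp_all add: funpow_0)

lemma funpow_inv_left: "SL_int F \<Longrightarrow> ((\<lambda>y. matrix_inv F *v y) ^^ n) (((\<lambda>y. F *v y) ^^ n) x) = x"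
proof (induction n arbitrary: x)
  case 0 then show ?case by simp
next
  case (Suc n)
  have "((\<lambda>y. matrix_inv F *v y) ^^ Suc n) (((\<lambda>y. F *v y) ^^ Suc n) x)
     = ((\<lambda>y. matrix_inv F *v y) ^^ n) (matrix_inv F *v (F *v (((\<lambda>y. F *v y) ^^ n) x)))"
    by (simp only: funpow_Suc_right[of n "\<lambda>y. matrix_inv F *v y"] funpow.simps(2)[of n "\<lambda>y. F *v y"] o_apply)
  then show ?case using Suc by (simp add: SL_inv_left del: funpow.simps)
qed

lemma funpow_add_apply: "(f ^^ (a + b)) x = (f ^^ a) ((f ^^ b) x)"
  by (simp add: funpow_add)

lemma growth_contra:
  fixes \<alpha> \<beta> A B :: real
  assumes "0 \<le> \<beta>" "\<beta> < \<alpha>" "A > 0" "\<forall>j::nat. A * \<alpha>^j \<le> B * \<beta>^j"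
  shows False
proof -
  have "A \<le> B" using assms(4)[rule_format, of 0] by simp
  show False
  proof (cases "\<beta> = 0")
    case True
    have "A * \<alpha> \<le> 0" using assms(4)[rule_format, of 1] True by simp
    moreover have "A * \<alpha> > 0" using assms by simp
    ultimately show False by simp
  next
    case False
    then have bp: "\<beta> > 0" using assms by simp
    then have "1 < \<alpha> / \<beta>" using assms by simp
    then obtain n where n: "B / A < (\<alpha> / \<beta>)^n" using real_arch_pow by blast
    then have "B < A * (\<alpha> / \<beta>)^n" using assms(3) by (simp add: field_simps)
    then have "B * \<beta>^n < A * (\<alpha> / \<beta>)^n * \<beta>^n" using bp by simp
    also have "\<dots> = A * \<alpha>^n" using bp by (simp add: power_divide field_simps)
    finally show False using assms(4)[rule_format, of n] by simp
  qed
qed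

lemma inv_subspace_onto:
  fixes f :: "real^'n \<Rightarrow> real^'n"
  assumes "linear f" "subspace V" "f ` V \<subseteq> V" "inj_on f V"
  shows "f ` V = V"
proof -
  have "span V = V" using assms(2) by (simp add: span_eq_iff)
  then have "dim (f ` V) = dim V" using assms by (metis eucl.dim_image_eq)
  then show ?thesis using assms by (intro eucl.subspace_dim_equal linear_subspace_image) auto
qed

lemma sum_atMost_split: "(\<Sum>i\<le>(n::nat). f i) = (\<Sum>i<n. f i) + (f n :: 'a::comm_monoid_add)"
proof -
  have "{..n} = insert n {..<n}" by auto
  then show ?thesis by (simp add: add.commute)
qed

lemma core_T:
  fixes F :: "real^'n^'n" and k s :: "real^'n"
  assumes F: "SL_int F"
  and n0: "0 < n"
  and zn: "z n \<noteq> 0"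
  and relk: "(\<Sum>i\<le>n. z i *\<^sub>R ((\<lambda>y. F *v y)^^i) k) = 0"
  and rels: "(\<Sum>i\<le>n. z i *\<^sub>R ((\<lambda>y. F *v y)^^i) s) = 0"
  and ind: "\<forall>c. (\<Sum>i<n. c i *\<^sub>R ((\<lambda>y. F *v y)^^i) k) = 0 \<longrightarrow> (\<forall>i<n. c i = 0)"
  shows "\<exists>T. linear T \<and> (\<forall>j. T (((\<lambda>y. F *v y)^^j) k) = ((\<lambda>y. F *v y)^^j) s)
             \<and> (\<forall>j. T (((\<lambda>y. matrix_inv F *v y)^^j) k) = ((\<lambda>y. matrix_inv F *v y)^^j) s)"
proof -
  define g where "g = (\<lambda>y::real^'n. F *v y)"
  define gi where "gi = (\<lambda>y::real^'n. matrix_inv F *v y)"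
  define e where "e i = (g^^i) k" for i
  define e' where "e' i = (g^^i) s" for i
  have lg: "linear g" unfolding g_def by (rule matrix_vector_mul_linear)
  have gi_g: "gi (g x) = x" for x unfolding g_def gi_def using SL_inv_left[OF F] by simp
  have inj: "inj_on e {..<n}"
  proof (rule inj_onI, rule ccontr)
    fix a b assume ab: "a \<in> {..<n}" "b \<in> {..<n}" "e a = e b" "a \<noteq> b"
    define c where "c i = (if i = a then 1 else 0) - (if i = b then 1 else (0::real))" for i
    have "(\<Sum>i<n. c i *\<^sub>R e i) = (\<Sum>i<n. (if i = a then e i else 0) - (if i = b then e i else 0))"
      by (intro sum.cong) (auto simp: c_def)
    also have "\<dots> = (\<Sum>i<n. (if i = a then e i else 0)) - (\<Sum>i<n. (if i = b then e i else 0))"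
      by (simp add: sum_subtractf)
    also have "\<dots> = 0" using ab by simp
    finally have "\<forall>i<n. c i = 0" using ind unfolding e_def g_def by blast
    then show False using ab unfolding c_def by auto
  qed
  define B where "B = e ` {..<n}"
  have indB: "independent B"
    unfolding eucl.independent_explicit
  proof (intro conjI allI impI ballI)
    show "finite B" unfolding B_def by simp
    fix c v assume c: "(\<Sum>v\<in>B. c v *\<^sub>R v) = 0" and v: "v \<in> B"
    have "(\<Sum>i<n. c (e i) *\<^sub>R e i) = 0" using c inj unfolding B_def by (simp add: sum.reindex)
    then have h: "(\<Sum>i<n. (\<lambda>i. c (e i)) i *\<^sub>R ((\<lambda>y. F *v y)^^i) k) = 0" unfolding e_def g_def by simp
    have "\<forall>i<n. c (e i) = 0" using mp[OF spec[OF ind, of "\<lambda>i. c (e i)"] h] by simp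
    then show "c v = 0" using v unfolding B_def by auto
  qed
  obtain T where lT: "linear T" and Tb: "\<forall>x\<in>B. T x = e' (inv_into {..<n} e x)"
    using linear_independent_extend[OF indB, of "\<lambda>x. e' (inv_into {..<n} e x)"] by auto
  have Te: "T (e i) = e' i" if "i < n" for i
  proof -
    have "e i \<in> B" using that unfolding B_def by simp
    then have "T (e i) = e' (inv_into {..<n} e (e i))" using Tb by blast
    also have "inv_into {..<n} e (e i) = i" using inv_into_f_f[OF inj] that by simp
    finally show ?thesis .
  qed
  have relk': "z n *\<^sub>R e n = - (\<Sum>i<n. z i *\<^sub>R e i)"
    using relk unfolding sum_atMost_split e_def g_def by (simp add: eq_neg_iff_add_eq_0 add.commute)
  have rels': "z n *\<^sub>R e' n = - (\<Sum>i<n. z i *\<^sub>R e' i)"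
    using rels unfolding sum_atMost_split e'_def g_def by (simp add: eq_neg_iff_add_eq_0 add.commute)
  have en: "e n = (\<Sum>i<n. (- z i / z n) *\<^sub>R e i)"
  proof -
    have "e n = (1 / z n) *\<^sub>R (z n *\<^sub>R e n)" using zn by simp
    also have "\<dots> = (\<Sum>i<n. (- z i / z n) *\<^sub>R e i)" unfolding relk'
      by (simp add: scaleR_sum_right divide_inverse mult.commute sum_negf)
    finally show ?thesis .
  qed
  have e'n: "e' n = (\<Sum>i<n. (- z i / z n) *\<^sub>R e' i)"
  proof -
    have "e' n = (1 / z n) *\<^sub>R (z n *\<^sub>R e' n)" using zn by simp
    also have "\<dots> = (\<Sum>i<n. (- z i / z n) *\<^sub>R e' i)" unfolding rels'
      by (simp add: scaleR_sum_right divide_inverse mult.commute sum_negf)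
    finally show ?thesis .
  qed
  have en_span: "e n \<in> span B"
    unfolding en B_def by (intro span_sum span_scale span_base) auto
  have Ten: "T (e n) = e' n"
    unfolding en e'n using Te by (simp add: linear_sum[OF lT] linear_scale[OF lT] linear_neg[OF lT])
  have gB: "g b \<in> span B \<and> T (g b) = g (T b)" if bB: "b \<in> B" for b
  proof -
    obtain i where i: "i < n" "b = e i" using bB unfolding B_def by auto
    have ge: "g (e i) = e (Suc i)" and ge': "g (e' i) = e' (Suc i)" unfolding e_def e'_def by simp_all
    show ?thesis
    proof (cases "Suc i < n")
      case True
      then show ?thesis using i ge ge' Te span_base[of "e (Suc i)" B] unfolding B_def by auto
    next
      case False
      then have "Suc i = n" using i by simp
      then show ?thesis using i ge ge' Te Ten en_span by auto
    qed
  qed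
  have gspan: "g ` span B \<subseteq> span B"
  proof -
    have "g ` B \<subseteq> span B" using gB by auto
    then have "span (g ` B) \<subseteq> span B" by (simp add: span_minimal)
    then show ?thesis using span_linear_image[OF lg] by auto
  qed
  have comm: "T (g x) = g (T x)" if "x \<in> span B" for x
    using linear_eq_on_span[of "T \<circ> g" "g \<circ> T" B x] lT lg gB that
    by (auto intro: linear_compose)
  have pos: "e j \<in> span B \<and> T (e j) = e' j" for j
  proof (induction j)
    case 0
    then show ?case using n0 Te[of 0] span_base[of "e 0" B] unfolding B_def by auto
  next
    case (Suc j)
    have "e (Suc j) = g (e j)" "e' (Suc j) = g (e' j)" unfolding e_def e'_def by simp_all
    then show ?case using Suc gspan comm by auto
  qed
  have onto: "g ` span B = span B"
    by (rule inv_subspace_onto[OF lg subspace_span gspan])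
       (metis gi_g inj_on_inverseI)
  have neg1: "gi y \<in> span B \<and> T (gi y) = gi (T y)" if yB: "y \<in> span B" for y
  proof -
    obtain x where x: "x \<in> span B" "y = g x" using onto yB by blast
    then show ?thesis using comm gi_g by auto
  qed
  have neg: "(gi^^j) k \<in> span B \<and> T ((gi^^j) k) = (gi^^j) s" for j
  proof (induction j)
    case 0
    then show ?case using pos[of 0] unfolding e_def e'_def by simp
  next
    case (Suc j)
    then show ?case using neg1 by simp
  qed
  show ?thesis using lT pos neg unfolding e_def e'_def g_def gi_def by blast
qed

lemma stepA:
  fixes F :: "real^'n^'n" and k :: "real^'n"
  assumes F: "SL_int F" and ki: "int_vec k" and k0: "k \<noteq> 0"
  shows "\<exists>n z. 0 < n \<and> z n \<noteq> 0 \<and> (\<forall>i\<le>n. z i \<in> \<int>) \<and>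
     (\<Sum>i\<le>n. z i *\<^sub>R ((\<lambda>y. F *v y)^^i) k) = 0 \<and>
     (\<forall>c. (\<Sum>i<n. c i *\<^sub>R ((\<lambda>y. F *v y)^^i) k) = 0 \<longrightarrow> (\<forall>i<n. c i = 0))"
proof -
  define e where "e i = ((\<lambda>y. F *v y)^^i) k" for i
  have eint: "int_vec (e i)" for i
    unfolding e_def by (rule funpow_int_vec) (auto intro: SL_int_vec[OF F] ki)
  define P where "P n \<longleftrightarrow> (\<exists>z. (\<forall>i\<le>n. z i \<in> \<int>) \<and> (\<exists>i\<le>n. z i \<noteq> 0) \<and> (\<Sum>i\<le>n. z i *\<^sub>R e i) = 0)" for n
  define d where "d = CARD('n)"
  have realdep: "\<exists>c. (\<Sum>i\<le>d. c i *\<^sub>R e i) = 0 \<and> (\<exists>i\<le>d. c i \<noteq> 0)"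
  proof (cases "inj_on e {..d}")
    case True
    define E where "E = e ` {..d}"
    have "card E = Suc d" unfolding E_def using card_image[OF True] by simp
    then have "\<not> independent E" using independent_bound[of E] by (auto simp: d_def)
    then obtain t u where tu: "finite t" "t \<subseteq> E" "(\<Sum>v\<in>t. u v *\<^sub>R v) = 0" "\<exists>v\<in>t. u v \<noteq> 0"
      unfolding dependent_explicit by blast
    define c where "c i = (if e i \<in> t then u (e i) else 0)" for i
    have "(\<Sum>i\<le>d. c i *\<^sub>R e i) = (\<Sum>v\<in>E. (if v \<in> t then u v *\<^sub>R v else 0))"
    proof -
      have "(\<Sum>i\<le>d. c i *\<^sub>R e i) = (\<Sum>i\<le>d. (if e i \<in> t then u (e i) *\<^sub>R e i else 0))"
        by (intro sum.cong) (auto simp: c_def)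
      also have "\<dots> = (\<Sum>v\<in>E. (if v \<in> t then u v *\<^sub>R v else 0))"
        unfolding E_def using True by (simp add: sum.reindex)
      finally show ?thesis .
    qed
    also have "\<dots> = (\<Sum>v\<in>E \<inter> t. u v *\<^sub>R v)" by (simp add: sum.inter_restrict E_def)
    also have "E \<inter> t = t" using tu by auto
    finally have "(\<Sum>i\<le>d. c i *\<^sub>R e i) = 0" using tu by simp
    moreover have "\<exists>i\<le>d. c i \<noteq> 0" using tu unfolding c_def E_def by auto
    ultimately show ?thesis by blast
  next
    case False
    then obtain a b where ab: "a \<le> d" "b \<le> d" "a \<noteq> b" "e a = e b"
      unfolding inj_on_def by auto
    define c where "c i = (if i = a then 1 else 0) - (if i = b then 1 else (0::real))" for i
    have "(\<Sum>i\<le>d. c i *\<^sub>R e i) = (\<Sum>i\<le>d. (if i = a then e i else 0) - (if i = b then e i else 0))"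
      by (intro sum.cong) (auto simp: c_def)
    also have "\<dots> = (\<Sum>i\<le>d. (if i = a then e i else 0)) - (\<Sum>i\<le>d. (if i = b then e i else 0))"
      by (simp add: sum_subtractf)
    also have "\<dots> = 0" using ab by simp
    finally show ?thesis using ab by (intro exI[of _ c]) (auto simp: c_def)
  qed
  have Pd: "P d"
  proof -
    obtain c where c: "(\<Sum>i\<le>d. c i *\<^sub>R e i) = 0" "\<exists>i\<le>d. c i \<noteq> 0" using realdep by blast
    have "\<exists>z. (\<forall>i\<in>{..d}. z i \<in> \<int>) \<and> (\<exists>i\<in>{..d}. z i \<noteq> 0) \<and> (\<Sum>i\<in>{..d}. z i *\<^sub>R e i) = 0"
      using c eint by (intro int_dep[of "{..d}" e c]) auto
    then obtain z where "(\<forall>i\<in>{..d}. z i \<in> \<int>)" "(\<exists>i\<in>{..d}. z i \<noteq> 0)" "(\<Sum>i\<in>{..d}. z i *\<^sub>R e i) = 0"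
      by blast
    then show ?thesis unfolding P_def by (intro exI[of _ z]) auto
  qed
  define n where "n = (LEAST n. P n)"
  have Pn: "P n" unfolding n_def using Pd by (rule LeastI)
  have minP: "m < n \<Longrightarrow> \<not> P m" for m unfolding n_def using not_less_Least by blast
  obtain z where z: "\<forall>i\<le>n. z i \<in> \<int>" "\<exists>i\<le>n. z i \<noteq> 0" "(\<Sum>i\<le>n. z i *\<^sub>R e i) = 0"
    using Pn unfolding P_def by blast
  have npos: "0 < n"
  proof (rule ccontr)
    assume "\<not> 0 < n"
    then have "n = 0" by simp
    then have "z 0 \<noteq> 0" using z(2) by simp
    moreover have "z 0 *\<^sub>R k = 0" using z(3) \<open>n = 0\<close> by (simp add: e_def)
    ultimately show False using k0 by simp
  qed
  have zn: "z n \<noteq> 0"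
  proof
    assume zn0: "z n = 0"
    have "P (n - 1)"
      unfolding P_def
    proof (intro exI[of _ z] conjI)
      show "\<forall>i\<le>n - 1. z i \<in> \<int>" using z(1) by auto
      show "\<exists>i\<le>n - 1. z i \<noteq> 0"
      proof -
        obtain i where i: "i \<le> n" "z i \<noteq> 0" using z(2) by blast
        then have "i \<noteq> n" using zn0 by auto
        then show ?thesis using i by (intro exI[of _ i]) auto
      qed
      have eq: "{..<n} = {..n - 1}" using npos by auto
      have "(\<Sum>i\<le>n. z i *\<^sub>R e i) = (\<Sum>i\<le>n - 1. z i *\<^sub>R e i) + z n *\<^sub>R e n"
        unfolding sum_atMost_split eq ..
      then show "(\<Sum>i\<le>n - 1. z i *\<^sub>R e i) = 0" using z(3) zn0 by simp
    qed
    then show False using minP npos by simp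
  qed
  have ind: "\<forall>c. (\<Sum>i<n. c i *\<^sub>R e i) = 0 \<longrightarrow> (\<forall>i<n. c i = 0)"
  proof (rule allI, rule impI, rule ccontr)
    fix c assume c: "(\<Sum>i<n. c i *\<^sub>R e i) = 0" and nz: "\<not> (\<forall>i<n. c i = 0)"
    obtain z' where z': "\<forall>i\<in>{..<n}. z' i \<in> \<int>" "\<exists>i\<in>{..<n}. z' i \<noteq> 0" "(\<Sum>i\<in>{..<n}. z' i *\<^sub>R e i) = 0"
      using int_dep[of "{..<n}" e c] c nz eint by auto
    have eq: "{..<n} = {..n - 1}" using npos by auto
    have "P (n - 1)" unfolding P_def using z' unfolding eq by (intro exI[of _ z']) auto
    then show False using minP npos by simp
  qed
  have "0 < n \<and> z n \<noteq> 0 \<and> (\<forall>i\<le>n. z i \<in> \<int>) \<and> (\<Sum>i\<le>n. z i *\<^sub>R e i) = 0 \<and>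
     (\<forall>c. (\<Sum>i<n. c i *\<^sub>R e i) = 0 \<longrightarrow> (\<forall>i<n. c i = 0))"
    using npos zn z(1) z(3) ind by (intro conjI)
  then show ?thesis unfolding e_def by (intro exI[of _ n] exI[of _ z])
qed

lemma inv_mats:
  fixes P :: "real^'n^'n"
  assumes "invertible P" shows "matrix_inv P ** P = mat 1" "P ** matrix_inv P = mat 1"
proof -
  have "\<exists>A'. P ** A' = mat 1 \<and> A' ** P = mat 1" using assms unfolding invertible_def .
  then have "P ** matrix_inv P = mat 1 \<and> matrix_inv P ** P = mat 1"
    unfolding matrix_inv_def by (rule someI_ex)
  then show "matrix_inv P ** P = mat 1" "P ** matrix_inv P = mat 1" by auto
qed

lemma T_bound:
  fixes T :: "real^'n \<Rightarrow> real^'n" and P :: "real^'n^'n"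
  assumes lT: "linear T" and P: "invertible P"
  shows "\<exists>B>0. \<forall>x. norm (P *v T x) \<le> B * norm (P *v x)"
proof -
  define h where "h = (\<lambda>y. P *v T (matrix_inv P *v y))"
  have "linear h" unfolding h_def
    using linear_compose[OF linear_compose[OF matrix_vector_mul_linear lT] matrix_vector_mul_linear]
    by (simp add: o_def)
  then have "bounded_linear h" by (simp add: linear_conv_bounded_linear)
  then obtain B where B: "B > 0" "\<forall>y. norm (h y) \<le> norm y * B"
    using bounded_linear.pos_bounded by blast
  have "norm (P *v T x) \<le> B * norm (P *v x)" for x
  proof -
    have "matrix_inv P *v (P *v x) = x" by (simp add: matrix_vector_mul_assoc inv_mats[OF P])
    then have "h (P *v x) = P *v T x" unfolding h_def by simp
    then show ?thesis using B(2)[rule_format, of "P *v x"] by (simp add: mult.commute)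
  qed
  then show ?thesis using B(1) by blast
qed

lemma N_pos:
  fixes P :: "real^'n^'n"
  assumes "invertible P" "s \<noteq> 0" shows "norm (P *v s) > 0"
proof -
  have "inj ((*v) P)" using assms(1) by (rule inj_matrix_vector_mult)
  then have "P *v s \<noteq> 0" using assms(2) by (metis injD matrix_vector_mult_0_right)
  then show ?thesis by simp
qed

lemma U_part:
  fixes F P :: "real^'n^'n" and k s :: "real^'n" and C U :: "(real^'n) set"
  assumes F: "SL_int F"
  and n0: "0 < n" and zn: "z n \<noteq> 0"
  and relk: "(\<Sum>i\<le>n. z i *\<^sub>R ((\<lambda>y. F *v y)^^i) k) = 0"
  and rels: "(\<Sum>i\<le>n. z i *\<^sub>R ((\<lambda>y. F *v y)^^i) s) = 0"
  and ind: "\<forall>c. (\<Sum>i<n. c i *\<^sub>R ((\<lambda>y. F *v y)^^i) k) = 0 \<longrightarrow> (\<forall>i<n. c i = 0)"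
  and P: "invertible P"
  and kC: "k \<in> C" and k0: "k \<noteq> 0" and sU: "s \<in> U" and s0: "s \<noteq> 0"
  and gC: "\<forall>v\<in>C. F *v v \<in> C" and gU: "\<forall>v\<in>U. F *v v \<in> U"
  and NC: "\<forall>v\<in>C. norm (P *v (F *v v)) \<le> MC * norm (P *v v)"
  and NU: "\<forall>v\<in>U. mU * norm (P *v v) \<le> norm (P *v (F *v v))"
  and MC0: "0 \<le> MC" and MCU: "MC < mU"
  shows False
proof -
  define g where "g = (\<lambda>y::real^'n. F *v y)"
  define N where "N v = norm (P *v v)" for v
  obtain T where lT: "linear T" and Tpos: "\<forall>j. T ((g^^j) k) = (g^^j) s"
    using core_T[OF F n0 zn relk rels ind] unfolding g_def by blast
  obtain Bd where Bd: "Bd > 0" "\<forall>x. N (T x) \<le> Bd * N x"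
    using T_bound[OF lT P] unfolding N_def by blast
  have kCj: "(g^^j) k \<in> C" for j by (induction j) (auto simp: g_def kC gC)
  have sUj: "(g^^j) s \<in> U" for j by (induction j) (auto simp: g_def sU gU)
  have growk: "N ((g^^j) k) \<le> MC^j * N k" for j
  proof (induction j)
    case 0 then show ?case by simp
  next
    case (Suc j)
    have "N ((g^^Suc j) k) \<le> MC * N ((g^^j) k)" using NC kCj[of j] by (simp add: N_def g_def)
    also have "\<dots> \<le> MC * (MC^j * N k)" using Suc MC0 by (simp add: mult_left_mono)
    finally show ?case by (simp add: mult.assoc)
  qed
  have mU0: "0 \<le> mU" using MC0 MCU by simp
  have grows: "mU^j * N s \<le> N ((g^^j) s)" for j
  proof (induction j)
    case 0 then show ?case by simp
  next
    case (Suc j)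
    have "mU^Suc j * N s = mU * (mU^j * N s)" by (simp add: mult.assoc)
    also have "\<dots> \<le> mU * N ((g^^j) s)" using Suc mU0 by (rule mult_left_mono)
    also have "\<dots> \<le> N ((g^^Suc j) s)" using NU sUj[of j] by (simp add: N_def g_def)
    finally show ?case .
  qed
  have "\<forall>j. N s * mU^j \<le> (Bd * N k) * MC^j"
  proof
    fix j
    have "N s * mU^j \<le> N ((g^^j) s)" using grows by (simp add: mult.commute)
    also have "\<dots> = N (T ((g^^j) k))" using Tpos by simp
    also have "\<dots> \<le> Bd * N ((g^^j) k)" using Bd by blast
    also have "\<dots> \<le> Bd * (MC^j * N k)" using growk Bd(1) by (simp add: mult_left_mono)
    finally show "N s * mU^j \<le> (Bd * N k) * MC^j" by (simp add: ac_simps)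
  qed
  moreover have "N s > 0" unfolding N_def using N_pos[OF P s0] .
  ultimately show False using growth_contra[of MC mU "N s" "Bd * N k"] MC0 MCU by blast
qed

lemma S_part:
  fixes F P :: "real^'n^'n" and k s :: "real^'n" and C S :: "(real^'n) set"
  assumes F: "SL_int F"
  and n0: "0 < n" and zn: "z n \<noteq> 0"
  and relk: "(\<Sum>i\<le>n. z i *\<^sub>R ((\<lambda>y. F *v y)^^i) k) = 0"
  and rels: "(\<Sum>i\<le>n. z i *\<^sub>R ((\<lambda>y. F *v y)^^i) s) = 0"
  and ind: "\<forall>c. (\<Sum>i<n. c i *\<^sub>R ((\<lambda>y. F *v y)^^i) k) = 0 \<longrightarrow> (\<forall>i<n. c i = 0)"
  and P: "invertible P"
  and kC: "k \<in> C" and k0: "k \<noteq> 0" and sS: "s \<in> S" and s0: "s \<noteq> 0"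
  and gC: "\<forall>v\<in>C. matrix_inv F *v v \<in> C" and gS: "\<forall>v\<in>S. matrix_inv F *v v \<in> S"
  and NC: "\<forall>v\<in>C. mC * norm (P *v v) \<le> norm (P *v (F *v v))"
  and NS: "\<forall>v\<in>S. norm (P *v (F *v v)) \<le> sS * norm (P *v v)"
  and sS0: "0 \<le> sS" and sSC: "sS < mC"
  shows False
proof -
  define g where "g = (\<lambda>y::real^'n. matrix_inv F *v y)"
  define N where "N v = norm (P *v v)" for v
  obtain T where lT: "linear T" and Tneg: "\<forall>j. T ((g^^j) k) = (g^^j) s"
    using core_T[OF F n0 zn relk rels ind] unfolding g_def by blast
  obtain Bd where Bd: "Bd > 0" "\<forall>x. N (T x) \<le> Bd * N x"
    using T_bound[OF lT P] unfolding N_def by blast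
  have Fg: "F *v (g x) = x" for x unfolding g_def by (rule SL_inv_right[OF F])
  have kCj: "(g^^j) k \<in> C" for j by (induction j) (auto simp: g_def kC gC)
  have sSj: "(g^^j) s \<in> S" for j by (induction j) (auto simp: g_def sS gS)
  have mC0: "0 \<le> mC" using sS0 sSC by simp
  have growk: "mC^j * N ((g^^j) k) \<le> N k" for j
  proof (induction j)
    case 0 then show ?case by simp
  next
    case (Suc j)
    have "mC * N ((g^^Suc j) k) \<le> N (F *v (g^^Suc j) k)" using NC kCj[of "Suc j"] by (simp add: N_def)
    also have "F *v (g^^Suc j) k = (g^^j) k" using Fg by simp
    finally have "mC * N ((g^^Suc j) k) \<le> N ((g^^j) k)" .
    then have "mC^j * (mC * N ((g^^Suc j) k)) \<le> mC^j * N ((g^^j) k)" using mC0 by (simp add: mult_left_mono)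
    then show ?case using Suc by (simp add: ac_simps)
  qed
  have grows: "N s \<le> sS^j * N ((g^^j) s)" for j
  proof (induction j)
    case 0 then show ?case by simp
  next
    case (Suc j)
    have "N (F *v (g^^Suc j) s) \<le> sS * N ((g^^Suc j) s)" using NS sSj[of "Suc j"] by (simp add: N_def)
    also have "F *v (g^^Suc j) s = (g^^j) s" using Fg by simp
    finally have "N ((g^^j) s) \<le> sS * N ((g^^Suc j) s)" .
    then have "sS^j * N ((g^^j) s) \<le> sS^j * (sS * N ((g^^Suc j) s))" using sS0 by (simp add: mult_left_mono)
    then show ?case using Suc by (simp add: ac_simps)
  qed
  have "\<forall>j. N s * mC^j \<le> (Bd * N k) * sS^j"
  proof
    fix j
    have "N s * mC^j \<le> (sS^j * N ((g^^j) s)) * mC^j" using grows mC0 by (simp add: mult_right_mono)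
    also have "N ((g^^j) s) = N (T ((g^^j) k))" using Tneg by simp
    also have "(sS^j * N (T ((g^^j) k))) * mC^j \<le> (sS^j * (Bd * N ((g^^j) k))) * mC^j"
      using Bd sS0 mC0 by (intro mult_right_mono mult_left_mono) auto
    also have "\<dots> = (sS^j * Bd) * (mC^j * N ((g^^j) k))" by (simp add: ac_simps)
    also have "\<dots> \<le> (sS^j * Bd) * N k" using growk sS0 Bd(1) by (intro mult_left_mono) auto
    finally show "N s * mC^j \<le> (Bd * N k) * sS^j" by (simp add: ac_simps)
  qed
  moreover have "N s > 0" unfolding N_def using N_pos[OF P s0] .
  ultimately show False using growth_contra[of sS mC "N s" "Bd * N k"] sS0 sSC by blast
qed

lemma cos_shift: "t \<in> \<int> \<Longrightarrow> cos (2*pi*(a + t)) = cos (2*pi*a)"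
  by (simp add: distrib_left cos_add cos_integer_2pi sin_integer_2pi)

lemma inner_int: "int_vec m \<Longrightarrow> int_vec z \<Longrightarrow> m \<bullet> z \<in> \<int>"
  unfolding int_vec_def inner_vec_def by (auto intro!: Ints_sum Ints_mult)

lemma phi_deriv:
  "((\<lambda>x::real^'n. A * cos (2*pi*(m \<bullet> x)) + B * sin (2*pi*(m \<bullet> x))) has_derivative
     (\<lambda>h. (B * cos (2*pi*(m \<bullet> x)) - A * sin (2*pi*(m \<bullet> x))) * (2*pi*(m \<bullet> h)))) (at x)"
  by (auto intro!: derivative_eq_intros simp: algebra_simps)

lemma smooth_phi: "smooth_fun (\<lambda>x::real^'n. cos (2*pi*(m \<bullet> x)))"
proof -
  have ex: "\<exists>A B. iter_dderiv vs (\<lambda>x::real^'n. cos (2*pi*(m \<bullet> x))) =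
      (\<lambda>x. A * cos (2*pi*(m \<bullet> x)) + B * sin (2*pi*(m \<bullet> x)))" for vs
  proof (induction vs)
    case Nil
    show ?case by (intro exI[of _ 1] exI[of _ 0]) simp
  next
    case (Cons v vs)
    then obtain A B where AB: "iter_dderiv vs (\<lambda>x::real^'n. cos (2*pi*(m \<bullet> x))) =
      (\<lambda>x. A * cos (2*pi*(m \<bullet> x)) + B * sin (2*pi*(m \<bullet> x)))" by blast
    have "iter_dderiv (v # vs) (\<lambda>x::real^'n. cos (2*pi*(m \<bullet> x))) =
      (\<lambda>x. (B * (2*pi*(m \<bullet> v))) * cos (2*pi*(m \<bullet> x)) + (- A * (2*pi*(m \<bullet> v))) * sin (2*pi*(m \<bullet> x)))"
    proof
      fix x
      have "iter_dderiv (v # vs) (\<lambda>x::real^'n. cos (2*pi*(m \<bullet> x))) x =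
         frechet_derivative (\<lambda>x. A * cos (2*pi*(m \<bullet> x)) + B * sin (2*pi*(m \<bullet> x))) (at x) v"
        by (simp add: AB)
      also have "\<dots> = (B * cos (2*pi*(m \<bullet> x)) - A * sin (2*pi*(m \<bullet> x))) * (2*pi*(m \<bullet> v))"
        using frechet_derivative_at[OF phi_deriv[of A m B x]] by metis
      finally show "iter_dderiv (v # vs) (\<lambda>x::real^'n. cos (2*pi*(m \<bullet> x))) x =
        (B * (2*pi*(m \<bullet> v))) * cos (2*pi*(m \<bullet> x)) + (- A * (2*pi*(m \<bullet> v))) * sin (2*pi*(m \<bullet> x))"
        by (simp add: algebra_simps)
    qed
    then show ?case by blast
  qed
  show ?thesis unfolding smooth_fun_def
  proof (intro allI)
    fix vs x
    obtain A B where AB: "iter_dderiv vs (\<lambda>x::real^'n. cos (2*pi*(m \<bullet> x))) =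
      (\<lambda>x. A * cos (2*pi*(m \<bullet> x)) + B * sin (2*pi*(m \<bullet> x)))" using ex by blast
    show "iter_dderiv vs (\<lambda>x::real^'n. cos (2*pi*(m \<bullet> x))) differentiable at x"
      unfolding AB using phi_deriv by (rule differentiableI)
  qed
qed

lemma torus_phi: "int_vec m \<Longrightarrow> torus_fun (\<lambda>x::real^'n. cos (2*pi*(m \<bullet> x)))"
  unfolding torus_fun_def by (auto simp: inner_add_right cos_shift inner_int)

lemma phi_inv:
  assumes "int_vec m" "m \<bullet> w = 0" "int_vec z"
  shows "cos (2*pi*(m \<bullet> (y + w + z))) = cos (2*pi*(m \<bullet> (y::real^'n)))"
  using assms by (simp add: inner_add_right cos_shift inner_int)

lemma Fpow_pos: "Fpow F (int n) x = ((\<lambda>y. F *v y)^^n) x"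
  by (simp add: Fpow_def)
lemma Fpow_neg: "Fpow F (- int (Suc n)) x = ((\<lambda>y. matrix_inv F *v y)^^(Suc n)) x"
proof -
  have "nat (- (- int (Suc n))) = Suc n" by (simp only: minus_minus nat_int)
  moreover have "\<not> (0 \<le> - int (Suc n))" by simp
  ultimately show ?thesis unfolding Fpow_def by (simp only: if_False)
qed

lemma funpow_split3:
  fixes A :: "real^'n^'n"
  shows
  "((\<lambda>y. A *v y)^^n) (x + s + z) = ((\<lambda>y. A *v y)^^n) x + ((\<lambda>y. A *v y)^^n) s + ((\<lambda>y. A *v y)^^n) (z::real^'n)"
  using funpow_linear[of n A] by (simp add: linear_add)

lemma Hol_s_zero:
  fixes F :: "real^'n^'n"
  assumes F: "SL_int F" and m: "int_vec m" and mS: "\<forall>w\<in>S. m \<bullet> w = 0"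
    and gS: "\<forall>v\<in>S. F *v v \<in> S" and y: "y \<in> Wss S x"
  shows "Hol_s F x y (\<lambda>x. cos (2*pi*(m \<bullet> x))) = 0"
proof -
  obtain s where s: "s \<in> S" "int_vec (y - x - s)" using y unfolding Wss_def by blast
  define z where "z = y - x - s"
  have yx: "y = x + s + z" unfolding z_def by simp
  have sj: "((\<lambda>y. F *v y)^^j) s \<in> S" for j by (induction j) (auto simp: s gS)
  have zj: "int_vec (((\<lambda>y. F *v y)^^j) z)" for j
    using s(2) unfolding z_def by (intro funpow_int_vec SL_int_vec[OF F])
  have "(\<lambda>n. cos (2*pi*(m \<bullet> Fpow F (int n) x)) - cos (2*pi*(m \<bullet> Fpow F (int n) y))) = (\<lambda>n. 0)"
  proof
    fix n
    show "cos (2*pi*(m \<bullet> Fpow F (int n) x)) - cos (2*pi*(m \<bullet> Fpow F (int n) y)) = 0"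
      unfolding Fpow_pos yx funpow_split3 using phi_inv[OF m _ zj] mS sj by simp
  qed
  then show ?thesis unfolding Hol_s_def by simp
qed

lemma Hol_u_zero:
  fixes F :: "real^'n^'n"
  assumes F: "SL_int F" and m: "int_vec m" and mU: "\<forall>w\<in>U. m \<bullet> w = 0"
    and gU: "\<forall>v\<in>U. matrix_inv F *v v \<in> U" and y: "y \<in> Wuu U x"
  shows "Hol_u F x y (\<lambda>x. cos (2*pi*(m \<bullet> x))) = 0"
proof -
  obtain s where s: "s \<in> U" "int_vec (y - x - s)" using y unfolding Wuu_def by blast
  define z where "z = y - x - s"
  have yx: "y = x + s + z" unfolding z_def by simp
  have sj: "((\<lambda>y. matrix_inv F *v y)^^j) s \<in> U" for j by (induction j) (auto simp: s gU)
  have zj: "int_vec (((\<lambda>y. matrix_inv F *v y)^^j) z)" for j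
    using s(2) unfolding z_def by (intro funpow_int_vec SL_inv_int_vec[OF F])
  have "(\<lambda>n. cos (2*pi*(m \<bullet> Fpow F (- int (Suc n)) x)) - cos (2*pi*(m \<bullet> Fpow F (- int (Suc n)) y))) = (\<lambda>n. 0)"
  proof
    fix n
    show "cos (2*pi*(m \<bullet> Fpow F (- int (Suc n)) x)) - cos (2*pi*(m \<bullet> Fpow F (- int (Suc n)) y)) = 0"
      unfolding Fpow_neg yx funpow_split3
      using phi_inv[OF m mU[rule_format, OF sj[of "Suc n"]] zj[of "Suc n"], of "((\<lambda>y. matrix_inv F *v y)^^Suc n) x"]
      by (simp del: funpow.simps)
  qed
  then show ?thesis unfolding Hol_u_def by simp
qed

lemma PCF_zero:
  assumes Hs: "\<forall>x y. y \<in> Wss S x \<longrightarrow> Hol_s F x y \<phi> = 0"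
    and Hu: "\<forall>x y. y \<in> Wuu U x \<longrightarrow> Hol_u F x y \<phi> = 0"
    and c: "su_cycle S U x0 legs"
  shows "PCF F x0 legs \<phi> = 0"
  unfolding PCF_def
proof (rule sum.neutral, rule ballI)
  fix j assume j: "j \<in> {..<length legs}"
  define prev where "prev = (if j = 0 then x0 else fst (legs ! (j - 1)))"
  obtain y b where yb: "legs ! j = (y, b)" by (cases "legs ! j") auto
  have "(let prev = (if j = 0 then x0 else fst (legs ! (j - 1))); (y, b) = legs ! j in
         if b then y \<in> Wss S prev else y \<in> Wuu U prev)"
    using c j unfolding su_cycle_def by blast
  then have h: "if b then y \<in> Wss S prev else y \<in> Wuu U prev"
    unfolding Let_def yb prev_def by simp
  have "(let prev = (if j = 0 then x0 else fst (legs ! (j - 1))); (y, b) = legs ! j in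
       if b then Hol_s F prev y \<phi> else Hol_u F prev y \<phi>) = (if b then Hol_s F prev y \<phi> else Hol_u F prev y \<phi>)"
    unfolding Let_def yb prev_def by simp
  also have "\<dots> = 0" using h Hs Hu by (cases b) auto
  finally show "(let prev = (if j = 0 then x0 else fst (legs ! (j - 1))); (y, b) = legs ! j in
       if b then Hol_s F prev y \<phi> else Hol_u F prev y \<phi>) = 0" .
qed

lemma not_cob:
  fixes F :: "real^'n^'n" and m :: "real^'n" and u :: "real^'n \<Rightarrow> real"
  assumes F: "SL_int F" and m: "int_vec m" and m0: "m \<noteq> 0" and u: "torus_fun u"
    and cob: "\<forall>x. cos (2*pi*(m \<bullet> x)) = u (F *v x) - u x + K"
  shows False
proof -
  define g where "g = (\<lambda>y::real^'n. F *v y)"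
  define gi where "gi = (\<lambda>y::real^'n. matrix_inv F *v y)"
  obtain j where mj: "m $ j \<noteq> 0" using m0 by (metis vec_eq_iff zero_index)
  obtain zi :: int where zi: "m $ j = of_int zi" using m unfolding int_vec_def by (metis Ints_cases)
  define M where "M = 2 * \<bar>zi\<bar>"
  have Mpos: "M > 0" using mj zi unfolding M_def by auto
  define e where "e i = (g^^i) (axis j 1)" for i
  have eint: "int_vec (e i)" for i
    unfolding e_def g_def by (intro funpow_int_vec SL_int_vec[OF F] int_vec_axis)
  define r where "r i = (\<lambda>l. \<lfloor>e i $ l\<rfloor> mod M)" for i
  have rX: "range r \<subseteq> Pi UNIV (\<lambda>_. {0..<M})" unfolding r_def using Mpos by auto
  have finX: "finite (Pi UNIV (\<lambda>_::'n. {0..<M}))"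
    using finite_PiE[of "UNIV::'n set" "\<lambda>_. {0..<M}"] by (simp add: PiE_UNIV_domain)
  have "\<not> inj r"
  proof
    assume "inj r"
    then have "finite (UNIV :: nat set)" using inj_on_finite[OF _ rX finX] by blast
    then show False by simp
  qed
  then obtain a0 b0 where ab0: "a0 \<noteq> b0" "r a0 = r b0" unfolding inj_def by blast
  define a where "a = min a0 b0"
  define b where "b = max a0 b0"
  have ab: "a < b" "r a = r b" using ab0 unfolding a_def b_def by (auto simp: min_def max_def)
  define D where "D = (1 / of_int M) *\<^sub>R (e b - e a)"
  have Dint: "int_vec D" unfolding int_vec_def
  proof
    fix l
    have "\<lfloor>e b $ l\<rfloor> mod M = \<lfloor>e a $ l\<rfloor> mod M" using ab(2) unfolding r_def by metis
    then have "M dvd \<lfloor>e b $ l\<rfloor> - \<lfloor>e a $ l\<rfloor>" by (simp add: mod_eq_dvd_iff)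
    then obtain t where t: "\<lfloor>e b $ l\<rfloor> - \<lfloor>e a $ l\<rfloor> = M * t" by blast
    have "of_int \<lfloor>e a $ l\<rfloor> = e a $ l" "of_int \<lfloor>e b $ l\<rfloor> = e b $ l"
      using eint[of a] eint[of b] unfolding int_vec_def by (metis Ints_cases floor_of_int)+
    then have "e b $ l - e a $ l = of_int M * of_int t" using t by (metis of_int_diff of_int_mult)
    then have "D $ l = of_int t" unfolding D_def using Mpos by simp
    then show "D $ l \<in> \<int>" by simp
  qed
  define p where "p = b - a"
  have ppos: "p > 0" using ab unfolding p_def by simp
  define x0 where "x0 = (1 / of_int M) *\<^sub>R axis j (1::real)"
  have lgi: "linear (gi^^a)" unfolding gi_def by (rule funpow_linear)
  have lg: "linear (g^^p)" unfolding g_def by (rule funpow_linear)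
  have "(gi^^a) (e a) = axis j 1" unfolding e_def g_def gi_def by (rule funpow_inv_left[OF F])
  moreover have "(gi^^a) (e b) = (g^^p) (axis j 1)"
  proof -
    have "e b = (g^^a) ((g^^p) (axis j 1))" unfolding e_def p_def using ab(1)
      by (metis funpow_add_apply le_add_diff_inverse less_imp_le)
    then show ?thesis unfolding g_def gi_def using funpow_inv_left[OF F] by simp
  qed
  ultimately have "(gi^^a) D = (1 / of_int M) *\<^sub>R ((g^^p) (axis j 1) - axis j 1)"
    unfolding D_def using lgi by (simp add: linear_scale linear_diff)
  moreover have "int_vec ((gi^^a) D)" unfolding gi_def by (intro funpow_int_vec SL_inv_int_vec[OF F] Dint)
  ultimately have per: "int_vec ((g^^p) x0 - x0)"
    unfolding x0_def using lg by (simp add: linear_scale linear_diff scaleR_diff_right)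
  have K1: "K = 1" using cob[rule_format, of 0] by simp
  define \<phi> where "\<phi> x = cos (2*pi*(m \<bullet> x))" for x
  have "(\<Sum>i<p. \<phi> ((g^^i) x0)) = (\<Sum>i<p. (u ((g^^Suc i) x0) - u ((g^^i) x0)) + K)"
    unfolding \<phi>_def using cob by (simp add: g_def sum.distrib)
  also have "\<dots> = u ((g^^p) x0) - u x0 + of_nat p * K"
    using sum_lessThan_telescope[of "\<lambda>i. u ((g^^i) x0)" p] by (simp add: sum.distrib del: funpow.simps)
  also have "u ((g^^p) x0) = u (x0 + ((g^^p) x0 - x0))" by simp
  also have "\<dots> = u x0" using u per unfolding torus_fun_def by blast
  finally have sum_eq: "(\<Sum>i<p. \<phi> ((g^^i) x0)) = of_nat p" using K1 by simp
  have "\<phi> x0 = -1"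
  proof -
    have "m \<bullet> x0 = of_int zi / of_int M" unfolding x0_def using zi by (simp add: inner_axis)
    show ?thesis
    proof (cases "zi > 0")
      case True
      then have "of_int M = 2 * (of_int zi :: real)" unfolding M_def by simp
      then have "m \<bullet> x0 = 1/2" using \<open>m \<bullet> x0 = of_int zi / of_int M\<close> True by simp
      then have h: "2*pi*(m \<bullet> x0) = pi" by simp
      show ?thesis by (simp only: \<phi>_def h cos_pi)
    next
      case False
      then have "zi < 0" using mj zi by auto
      then have "of_int M = - 2 * (of_int zi :: real)" unfolding M_def by simp
      then have "m \<bullet> x0 = - 1/2" using \<open>m \<bullet> x0 = of_int zi / of_int M\<close> \<open>zi < 0\<close> by simp
      then have h: "2*pi*(m \<bullet> x0) = - pi" by simp
      show ?thesis by (simp only: \<phi>_def h cos_minus cos_pi)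
    qed
  qed
  obtain q where q: "p = Suc q" using ppos by (metis Suc_pred')
  have "(\<Sum>i<p. \<phi> ((g^^i) x0)) = \<phi> x0 + (\<Sum>i<q. \<phi> ((g^^Suc i) x0))"
    unfolding q by (subst sum.lessThan_Suc_shift) simp
  also have "(\<Sum>i<q. \<phi> ((g^^Suc i) x0)) \<le> (\<Sum>i<q. 1)"
    by (intro sum_mono) (simp add: \<phi>_def)
  finally have "(\<Sum>i<p. \<phi> ((g^^i) x0)) \<le> -1 + of_nat q" using \<open>\<phi> x0 = -1\<close> by simp
  then show False using sum_eq q by simp
qed

lemma stepC:
  fixes Q :: "real^'n \<Rightarrow> real^'n" and k :: "real^'n"
  assumes lQ: "linear Q" and Qint: "\<forall>x. int_vec x \<longrightarrow> int_vec (Q x)"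
    and k0: "k \<noteq> 0" and Qk: "Q k = 0"
  shows "\<exists>m. int_vec m \<and> m \<noteq> 0 \<and> (\<forall>y. m \<bullet> Q y = 0)"
proof -
  define A where "A = matrix Q"
  have AQ: "A *v y = Q y" for y
    unfolding A_def using matrix_works lQ by (metis linear_matrix_vector_mul_eq)
  have "\<not> inj Q" using k0 Qk linear_0[OF lQ] by (metis injD)
  then have "det A = 0" unfolding A_def using det_nz_iff_inj[OF lQ] by blast
  then have "det (matrix ((*v) (transpose A))) = 0" by (simp add: matrix_of_matrix_vector_mul det_transpose)
  then have "\<not> inj ((*v) (transpose A))" using det_nz_iff_inj[OF matrix_vector_mul_linear] by blast
  then obtain x y where xy: "x \<noteq> y" "transpose A *v x = transpose A *v y" unfolding inj_def by blast
  define w where "w = x - y"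
  have w0: "w \<noteq> 0" using xy unfolding w_def by simp
  have "transpose A *v w = 0" unfolding w_def using xy by (simp add: matrix_vector_mult_diff_distrib)
  then have rows: "(\<Sum>i\<in>UNIV. w $ i *\<^sub>R A $ i) = 0"
    by (simp add: vec_eq_iff matrix_vector_mult_def transpose_def sum_component mult.commute)
  have Aint: "\<forall>i\<in>UNIV. int_vec (A $ i)"
  proof
    fix i
    have "int_vec (Q (axis j 1))" for j using Qint int_vec_axis by blast
    then show "int_vec (A $ i)" unfolding A_def int_vec_def matrix_def by (simp add: int_vec_def)
  qed
  have "\<exists>i\<in>UNIV. w $ i \<noteq> 0" using w0 by (metis vec_eq_iff zero_index UNIV_I)
  then obtain z where z: "\<forall>i\<in>UNIV. z i \<in> \<int>" "\<exists>i\<in>UNIV. z i \<noteq> 0" "(\<Sum>i\<in>UNIV. z i *\<^sub>R A $ i) = 0"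
    using int_dep[OF finite_class.finite_UNIV Aint rows] by blast
  define m where "m = (\<chi> i. z i)"
  have "int_vec m" using z(1) unfolding m_def int_vec_def by simp
  moreover have "m \<noteq> 0" using z(2) unfolding m_def by (metis vec_eq_iff vec_lambda_beta zero_index)
  moreover have "m \<bullet> Q y = 0" for y
  proof -
    have "m v* A = 0"
      using z(3) by (simp add: vec_eq_iff vector_matrix_mult_def m_def sum_component mult.commute)
    then have "(m v* A) \<bullet> y = 0" by simp
    then show ?thesis by (simp add: dot_lmul_matrix AQ)
  qed
  ultimately show ?thesis by blast
qed

theorem theorem3p2:
  fixes F :: "real^'n^'n" and S C U :: "(real^'n) set"
  assumes "SL_int F"
    and "partially_hyperbolic F S C U"
    and "\<forall>\<phi> :: real^'n \<Rightarrow> real. smooth_fun \<phi> \<and> torus_fun \<phi> \<and>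
           (\<forall>x0 legs. su_cycle S U x0 legs \<longrightarrow> PCF F x0 legs \<phi> = 0) \<longrightarrow>
           (\<exists>u :: real^'n \<Rightarrow> real. \<exists>K :: real. torus_fun u \<and>
              (\<forall>x. \<phi> x = u (F *v x) - u x + K))"
  shows "{k \<in> C. int_vec k} = {0}"
proof -
  note F = assms(1)
  have sub1: "subspace S" using assms(2) unfolding partially_hyperbolic_def by (elim conjE) assumption
  have sub2: "subspace C" using assms(2) unfolding partially_hyperbolic_def by (elim conjE) assumption
  have sub3: "subspace U" using assms(2) unfolding partially_hyperbolic_def by (elim conjE) assumption
  note sub = sub1 sub2 sub3
  have Sne: "S \<noteq> {0}" using assms(2) unfolding partially_hyperbolic_def by (elim conjE) assumption
  have gS: "(\<lambda>y. F *v y) ` S = S" using assms(2) unfolding partially_hyperbolic_def by (elim conjE) assumption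
  have gC: "(\<lambda>y. F *v y) ` C = C" using assms(2) unfolding partially_hyperbolic_def by (elim conjE) assumption
  have gU: "(\<lambda>y. F *v y) ` U = U" using assms(2) unfolding partially_hyperbolic_def by (elim conjE) assumption
  have "\<exists>P :: real^'n^'n. invertible P \<and>
        (let N = (\<lambda>v. norm (P *v v)) in
         \<exists>sS mC MC mU.
           sS < 1 \<and> mU > 1 \<and> sS < mC \<and> MC < mU \<and>
           (\<forall>v\<in>S. N (F *v v) \<le> sS * N v) \<and>
           (\<forall>v\<in>C. mC * N v \<le> N (F *v v) \<and> N (F *v v) \<le> MC * N v) \<and>
           (\<forall>v\<in>U. mU * N v \<le> N (F *v v)))"
    using assms(2) unfolding partially_hyperbolic_def by (elim conjE) assumption
  then obtain P :: "real^'n^'n" where P: "invertible P" and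
    PL: "\<exists>sS mC MC mU.
           sS < 1 \<and> mU > 1 \<and> sS < mC \<and> MC < mU \<and>
           (\<forall>v\<in>S. norm (P *v (F *v v)) \<le> sS * norm (P *v v)) \<and>
           (\<forall>v\<in>C. mC * norm (P *v v) \<le> norm (P *v (F *v v)) \<and> norm (P *v (F *v v)) \<le> MC * norm (P *v v)) \<and>
           (\<forall>v\<in>U. mU * norm (P *v v) \<le> norm (P *v (F *v v)))"
    unfolding Let_def by blast
  then obtain sS mC MC mU where cst: "sS < 1" "mU > 1" "sS < mC" "MC < mU"
    and NS: "\<forall>v\<in>S. norm (P *v (F *v v)) \<le> sS * norm (P *v v)"
    and NC: "\<forall>v\<in>C. mC * norm (P *v v) \<le> norm (P *v (F *v v)) \<and> norm (P *v (F *v v)) \<le> MC * norm (P *v v)"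
    and NU: "\<forall>v\<in>U. mU * norm (P *v v) \<le> norm (P *v (F *v v))"
    by (elim exE conjE)
  have gS': "\<forall>v\<in>S. F *v v \<in> S" and gC': "\<forall>v\<in>C. F *v v \<in> C" and gU': "\<forall>v\<in>U. F *v v \<in> U"
    using gS gC gU by blast+
  have inv_of: "\<forall>v\<in>X. matrix_inv F *v v \<in> X" if gX: "(\<lambda>y. F *v y) ` X = X" for X
  proof
    fix v assume "v \<in> X"
    then obtain w where "w \<in> X" "v = F *v w" using gX by blast
    then show "matrix_inv F *v v \<in> X" using SL_inv_left[OF F] by simp
  qed
  have giS: "\<forall>v\<in>S. matrix_inv F *v v \<in> S" and giC: "\<forall>v\<in>C. matrix_inv F *v v \<in> C"
    and giU: "\<forall>v\<in>U. matrix_inv F *v v \<in> U" using inv_of gS gC gU by blast+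
  have sS0: "0 \<le> sS"
  proof -
    obtain s0 where s0: "s0 \<in> S" "s0 \<noteq> 0" using Sne sub(1) subspace_0 by blast
    have "0 \<le> sS * norm (P *v s0)" using NS s0 by (meson norm_ge_zero order_trans)
    moreover have "norm (P *v s0) > 0" using N_pos[OF P s0(2)] .
    ultimately show ?thesis by (simp add: zero_le_mult_iff)
  qed
  have main: "k = 0" if kC: "k \<in> C" and ki: "int_vec k" for k
  proof (rule ccontr)
    assume k0: "k \<noteq> 0"
    obtain n z where nz: "0 < n" "z n \<noteq> 0" "\<forall>i\<le>n. z i \<in> \<int>"
      "(\<Sum>i\<le>n. z i *\<^sub>R ((\<lambda>y. F *v y)^^i) k) = 0"
      "\<forall>c. (\<Sum>i<n. c i *\<^sub>R ((\<lambda>y. F *v y)^^i) k) = 0 \<longrightarrow> (\<forall>i<n. c i = 0)"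
      using stepA[OF F ki k0] by blast
    have MC0: "0 \<le> MC"
    proof -
      have "mC * norm (P *v k) \<le> MC * norm (P *v k)" using NC kC by (meson order_trans)
      moreover have "norm (P *v k) > 0" using N_pos[OF P k0] .
      ultimately have "mC \<le> MC" by simp
      then show ?thesis using sS0 cst by simp
    qed
    define Q where "Q x = (\<Sum>i\<le>n. z i *\<^sub>R ((\<lambda>y. F *v y)^^i) x)" for x
    have lQ: "linear Q" unfolding Q_def
    proof (rule linear_compose_sum, rule ballI)
      fix i
      have "linear ((*\<^sub>R) (z i) \<circ> ((\<lambda>y. F *v y)^^i))"
        by (rule linear_compose[OF funpow_linear linear_scaleR])
      then show "linear (\<lambda>x. z i *\<^sub>R ((\<lambda>y. F *v y)^^i) x)" by (simp add: o_def)
    qed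
    have Qint: "\<forall>x. int_vec x \<longrightarrow> int_vec (Q x)"
    proof (intro allI impI)
      fix x :: "real^'n" assume x: "int_vec x"
      have "int_vec (z i *\<^sub>R ((\<lambda>y. F *v y)^^i) x)" if "i \<in> {..n}" for i
      proof (rule int_vec_scale)
        show "z i \<in> \<int>" using nz(3) that by (simp add: atMost_iff)
        show "int_vec (((\<lambda>y. F *v y)^^i) x)"
          by (rule funpow_int_vec[where f="\<lambda>y. F *v y", OF SL_int_vec[OF F] x])
      qed
      then show "int_vec (Q x)" unfolding Q_def by (rule int_vec_sum)
    qed
    have Qk: "Q k = 0" unfolding Q_def using nz(4) .
    have Qsub: "Q ` X \<subseteq> X" if sX: "subspace X" "\<forall>v\<in>X. F *v v \<in> X" for X
    proof
      fix y assume "y \<in> Q ` X"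
      then obtain x where x: "x \<in> X" "y = Q x" by blast
      have "((\<lambda>y. F *v y)^^i) x \<in> X" for i using x(1) sX(2) by (induction i) auto
      then show "y \<in> X" unfolding x Q_def using sX(1) by (intro subspace_sum subspace_scale) auto
    qed
    have injX: "inj_on Q X" if X: "subspace X" and noker: "\<And>s. s \<in> X \<Longrightarrow> s \<noteq> 0 \<Longrightarrow> Q s = 0 \<Longrightarrow> False" for X
    proof (rule inj_onI, rule ccontr)
      fix x y assume "x \<in> X" "y \<in> X" "Q x = Q y" "x \<noteq> y"
      then show False using noker[of "x - y"] subspace_diff[OF X] linear_diff[OF lQ] by auto
    qed
    have QS: "Q ` S = S"
    proof (rule inv_subspace_onto[OF lQ sub(1) Qsub[OF sub(1) gS']], rule injX[OF sub(1)])
      fix s assume "s \<in> S" "s \<noteq> 0" "Q s = 0"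
      then show False
        using S_part[OF F nz(1) nz(2) nz(4) _ nz(5) P kC k0 \<open>s \<in> S\<close> \<open>s \<noteq> 0\<close> giC giS _ NS sS0 cst(3)]
          NC unfolding Q_def by blast
    qed
    have QU: "Q ` U = U"
    proof (rule inv_subspace_onto[OF lQ sub(3) Qsub[OF sub(3) gU']], rule injX[OF sub(3)])
      fix s assume "s \<in> U" "s \<noteq> 0" "Q s = 0"
      then show False
        using U_part[OF F nz(1) nz(2) nz(4) _ nz(5) P kC k0 \<open>s \<in> U\<close> \<open>s \<noteq> 0\<close> gC' gU' _ NU MC0 cst(4)]
          NC unfolding Q_def by blast
    qed
    obtain m where m: "int_vec m" "m \<noteq> 0" "\<forall>y. m \<bullet> Q y = 0" using stepC[OF lQ Qint k0 Qk] by blast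
    have mS: "\<forall>w\<in>S. m \<bullet> w = 0" using QS m(3) by (metis imageE)
    have mU: "\<forall>w\<in>U. m \<bullet> w = 0" using QU m(3) by (metis imageE)
    define \<phi> where "\<phi> x = cos (2*pi*(m \<bullet> x))" for x
    have Hs: "\<forall>x y. y \<in> Wss S x \<longrightarrow> Hol_s F x y \<phi> = 0"
      unfolding \<phi>_def using Hol_s_zero[OF F m(1) mS gS'] by blast
    have Hu: "\<forall>x y. y \<in> Wuu U x \<longrightarrow> Hol_u F x y \<phi> = 0"
      unfolding \<phi>_def using Hol_u_zero[OF F m(1) mU giU] by blast
    have "smooth_fun \<phi> \<and> torus_fun \<phi> \<and> (\<forall>x0 legs. su_cycle S U x0 legs \<longrightarrow> PCF F x0 legs \<phi> = 0)"
      unfolding \<phi>_def using smooth_phi torus_phi[OF m(1)] PCF_zero[OF Hs[unfolded \<phi>_def] Hu[unfolded \<phi>_def]]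
      by blast
    then obtain u K where u: "torus_fun u" "\<forall>x. \<phi> x = u (F *v x) - u x + K"
      using assms(3) by blast
    show False using not_cob[OF F m(1) m(2) u(1)] u(2) unfolding \<phi>_def by blast
  qed
  show ?thesis
  proof
    show "{k \<in> C. int_vec k} \<subseteq> {0}" using main by blast
    show "{0} \<subseteq> {k \<in> C. int_vec k}" using subspace_0[OF sub(2)] by simp
  qed
qed

end
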